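(* Let $\mathcal K$ be a 2-category and $\mathscr D\subseteq\mathcal K$ a dense inclusion. Let $f:A\to C$, $g:A\to B$, $h:B\to C$ be 1-cells and $\phi:f\Rightarrow hg$ a 2-cell. If for every object $D\in\mathscr D$ and every 1-cell $a:D\to A$ the 2-cell $\phi a$ exhibits $ga$ as a left lifting of $fa$ along $h$, then $\phi$ exhibits $g$ as an absolute left lifting of $f$ along $h$.
   Context: A full sub-2-category $\mathscr D\subseteq\mathcal K$ is dense if the 2-functor $\mathcal K\to[\mathscr D^{op},\mathrm{CAT}]$, $X\mapsto\mathcal K(-,X)|_{\mathscr D}$, is fully faithful (an isomorphism on hom-categories). Given $f:A\to C$, $g:A\to B$, $h:B\to C$, a 2-cell $\phi:f\Rightarrow hg$ exhibits $g$ as a left lifting of $f$ along $h$ if for every $k:A\to B$ the assignment $\kappa\mapsto(h\kappa)\cdot\phi$ is a bijection from 2-cells $g\Rightarrow k$ to 2-cells $f\Rightarrow hk$; this left lifting is absolute if for every $j:X\to A$, $\phi j$ exhibits $gj$ as a left lifting of $fj$ along $h$. *)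

theory Defs
  imports Main
begin

text \<open>Strict 2-categories, presented by sets of objects, 1-cells and 2-cells with
  source/target maps, composition of 1-cells ('comp1 g f' = g after f), vertical
  composition ('vcomp beta alpha' = beta after alpha) and horizontal composition
  ('hcomp beta alpha', where alpha lives on the domain side, like 'comp1').\<close>

record ('o, 'a, 'c) two_cat =
  Ob :: "'o set"
  Arr :: "'a set"
  Cel :: "'c set"
  src1 :: "'a \<Rightarrow> 'o"
  tgt1 :: "'a \<Rightarrow> 'o"
  dom2 :: "'c \<Rightarrow> 'a"
  cod2 :: "'c \<Rightarrow> 'a"
  comp1 :: "'a \<Rightarrow> 'a \<Rightarrow> 'a"
  id1 :: "'o \<Rightarrow> 'a"
  vcomp :: "'c \<Rightarrow> 'c \<Rightarrow> 'c"
  id2 :: "'a \<Rightarrow> 'c"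
  hcomp :: "'c \<Rightarrow> 'c \<Rightarrow> 'c"

definition hom :: "('o, 'a, 'c, 'm) two_cat_scheme \<Rightarrow> 'o \<Rightarrow> 'o \<Rightarrow> 'a set" where
  "hom K A B = {f \<in> Arr K. src1 K f = A \<and> tgt1 K f = B}"

definition cells :: "('o, 'a, 'c, 'm) two_cat_scheme \<Rightarrow> 'a \<Rightarrow> 'a \<Rightarrow> 'c set" where
  "cells K f g = {\<theta> \<in> Cel K. dom2 K \<theta> = f \<and> cod2 K \<theta> = g}"

definition two_category :: "('o, 'a, 'c, 'm) two_cat_scheme \<Rightarrow> bool" where
  "two_category K \<longleftrightarrow>
     (\<forall>f\<in>Arr K. src1 K f \<in> Ob K \<and> tgt1 K f \<in> Ob K)
   \<and> (\<forall>\<theta>\<in>Cel K. dom2 K \<theta> \<in> Arr K \<and> cod2 K \<theta> \<in> Arr K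
        \<and> src1 K (dom2 K \<theta>) = src1 K (cod2 K \<theta>) \<and> tgt1 K (dom2 K \<theta>) = tgt1 K (cod2 K \<theta>))
   \<comment> \<open>underlying 1-category\<close>
   \<and> (\<forall>A\<in>Ob K. id1 K A \<in> hom K A A)
   \<and> (\<forall>A B C f g. f \<in> hom K A B \<longrightarrow> g \<in> hom K B C \<longrightarrow> comp1 K g f \<in> hom K A C)
   \<and> (\<forall>A B C D f g h. f \<in> hom K A B \<longrightarrow> g \<in> hom K B C \<longrightarrow> h \<in> hom K C D \<longrightarrow>
        comp1 K h (comp1 K g f) = comp1 K (comp1 K h g) f)
   \<and> (\<forall>A B f. f \<in> hom K A B \<longrightarrow> comp1 K (id1 K B) f = f \<and> comp1 K f (id1 K A) = f)
   \<comment> \<open>hom-categories (vertical composition)\<close>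
   \<and> (\<forall>f\<in>Arr K. id2 K f \<in> cells K f f)
   \<and> (\<forall>f g h \<alpha> \<beta>. \<alpha> \<in> cells K f g \<longrightarrow> \<beta> \<in> cells K g h \<longrightarrow> vcomp K \<beta> \<alpha> \<in> cells K f h)
   \<and> (\<forall>f g h i \<alpha> \<beta> \<gamma>. \<alpha> \<in> cells K f g \<longrightarrow> \<beta> \<in> cells K g h \<longrightarrow> \<gamma> \<in> cells K h i \<longrightarrow>
        vcomp K \<gamma> (vcomp K \<beta> \<alpha>) = vcomp K (vcomp K \<gamma> \<beta>) \<alpha>)
   \<and> (\<forall>f g \<alpha>. \<alpha> \<in> cells K f g \<longrightarrow> vcomp K (id2 K g) \<alpha> = \<alpha> \<and> vcomp K \<alpha> (id2 K f) = \<alpha>)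
   \<comment> \<open>horizontal composition: typing, functoriality (identities and interchange)\<close>
   \<and> (\<forall>A B C f f' g g' \<alpha> \<beta>. f \<in> hom K A B \<longrightarrow> f' \<in> hom K A B \<longrightarrow> g \<in> hom K B C \<longrightarrow> g' \<in> hom K B C
        \<longrightarrow> \<alpha> \<in> cells K f f' \<longrightarrow> \<beta> \<in> cells K g g' \<longrightarrow>
        hcomp K \<beta> \<alpha> \<in> cells K (comp1 K g f) (comp1 K g' f'))
   \<and> (\<forall>A B C f g. f \<in> hom K A B \<longrightarrow> g \<in> hom K B C \<longrightarrow>
        hcomp K (id2 K g) (id2 K f) = id2 K (comp1 K g f))
   \<and> (\<forall>A B C f f' f'' g g' g'' \<alpha> \<alpha>' \<beta> \<beta>'.
        f \<in> hom K A B \<longrightarrow> f' \<in> hom K A B \<longrightarrow> f'' \<in> hom K A B \<longrightarrow>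
        g \<in> hom K B C \<longrightarrow> g' \<in> hom K B C \<longrightarrow> g'' \<in> hom K B C \<longrightarrow>
        \<alpha> \<in> cells K f f' \<longrightarrow> \<alpha>' \<in> cells K f' f'' \<longrightarrow>
        \<beta> \<in> cells K g g' \<longrightarrow> \<beta>' \<in> cells K g' g'' \<longrightarrow>
        hcomp K (vcomp K \<beta>' \<beta>) (vcomp K \<alpha>' \<alpha>) = vcomp K (hcomp K \<beta>' \<alpha>') (hcomp K \<beta> \<alpha>))
   \<comment> \<open>horizontal composition: associativity and units\<close>
   \<and> (\<forall>A B C D f f' g g' h h' \<alpha> \<beta> \<gamma>.
        f \<in> hom K A B \<longrightarrow> f' \<in> hom K A B \<longrightarrow> g \<in> hom K B C \<longrightarrow> g' \<in> hom K B C \<longrightarrow>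
        h \<in> hom K C D \<longrightarrow> h' \<in> hom K C D \<longrightarrow>
        \<alpha> \<in> cells K f f' \<longrightarrow> \<beta> \<in> cells K g g' \<longrightarrow> \<gamma> \<in> cells K h h' \<longrightarrow>
        hcomp K \<gamma> (hcomp K \<beta> \<alpha>) = hcomp K (hcomp K \<gamma> \<beta>) \<alpha>)
   \<and> (\<forall>A B f f' \<alpha>. f \<in> hom K A B \<longrightarrow> f' \<in> hom K A B \<longrightarrow> \<alpha> \<in> cells K f f' \<longrightarrow>
        hcomp K (id2 K (id1 K B)) \<alpha> = \<alpha> \<and> hcomp K \<alpha> (id2 K (id1 K A)) = \<alpha>)"

text \<open>A 2-natural transformation between the 2-functors K(-,X) and K(-,Y) restricted to
  the full sub-2-category on the object set \<D>, given by its component functors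
  (object part 'ao', morphism part 'am').\<close>

definition two_nat ::
  "('o, 'a, 'c, 'm) two_cat_scheme \<Rightarrow> 'o set \<Rightarrow> 'o \<Rightarrow> 'o \<Rightarrow>
   ('o \<Rightarrow> 'a \<Rightarrow> 'a) \<Rightarrow> ('o \<Rightarrow> 'c \<Rightarrow> 'c) \<Rightarrow> bool" where
  "two_nat K \<D> X Y ao am \<longleftrightarrow>
     \<comment> \<open>each component is a functor K(D,X) -> K(D,Y)\<close>
     (\<forall>D\<in>\<D>. \<forall>u\<in>hom K D X. ao D u \<in> hom K D Y)
   \<and> (\<forall>D\<in>\<D>. \<forall>u\<in>hom K D X. \<forall>v\<in>hom K D X. \<forall>\<theta>\<in>cells K u v.
        am D \<theta> \<in> cells K (ao D u) (ao D v))
   \<and> (\<forall>D\<in>\<D>. \<forall>u\<in>hom K D X. am D (id2 K u) = id2 K (ao D u))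
   \<and> (\<forall>D\<in>\<D>. \<forall>u\<in>hom K D X. \<forall>v\<in>hom K D X. \<forall>w\<in>hom K D X. \<forall>\<theta>\<in>cells K u v. \<forall>\<eta>\<in>cells K v w.
        am D (vcomp K \<eta> \<theta>) = vcomp K (am D \<eta>) (am D \<theta>))
     \<comment> \<open>naturality in 1-cells of \<D>\<close>
   \<and> (\<forall>D\<in>\<D>. \<forall>D'\<in>\<D>. \<forall>d\<in>hom K D' D. \<forall>u\<in>hom K D X.
        ao D' (comp1 K u d) = comp1 K (ao D u) d)
   \<and> (\<forall>D\<in>\<D>. \<forall>D'\<in>\<D>. \<forall>d\<in>hom K D' D. \<forall>u\<in>hom K D X. \<forall>v\<in>hom K D X. \<forall>\<theta>\<in>cells K u v.
        am D' (hcomp K \<theta> (id2 K d)) = hcomp K (am D \<theta>) (id2 K d))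
     \<comment> \<open>naturality in 2-cells of \<D>\<close>
   \<and> (\<forall>D\<in>\<D>. \<forall>D'\<in>\<D>. \<forall>d\<in>hom K D' D. \<forall>d'\<in>hom K D' D. \<forall>\<delta>\<in>cells K d d'. \<forall>u\<in>hom K D X.
        am D' (hcomp K (id2 K u) \<delta>) = hcomp K (id2 K (ao D u)) \<delta>)"

definition modification ::
  "('o, 'a, 'c, 'm) two_cat_scheme \<Rightarrow> 'o set \<Rightarrow> 'o \<Rightarrow> 'o \<Rightarrow>
   ('o \<Rightarrow> 'a \<Rightarrow> 'a) \<Rightarrow> ('o \<Rightarrow> 'c \<Rightarrow> 'c) \<Rightarrow> ('o \<Rightarrow> 'a \<Rightarrow> 'a) \<Rightarrow> ('o \<Rightarrow> 'c \<Rightarrow> 'c) \<Rightarrow>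
   ('o \<Rightarrow> 'a \<Rightarrow> 'c) \<Rightarrow> bool" where
  "modification K \<D> X Y ao am bo bm \<Gamma> \<longleftrightarrow>
     (\<forall>D\<in>\<D>. \<forall>u\<in>hom K D X. \<Gamma> D u \<in> cells K (ao D u) (bo D u))
   \<and> (\<forall>D\<in>\<D>. \<forall>u\<in>hom K D X. \<forall>v\<in>hom K D X. \<forall>\<theta>\<in>cells K u v.
        vcomp K (bm D \<theta>) (\<Gamma> D u) = vcomp K (\<Gamma> D v) (am D \<theta>))
   \<and> (\<forall>D\<in>\<D>. \<forall>D'\<in>\<D>. \<forall>d\<in>hom K D' D. \<forall>u\<in>hom K D X.
        \<Gamma> D' (comp1 K u d) = hcomp K (\<Gamma> D u) (id2 K d))"

text \<open>Density: the 2-functor X |-> K(-,X) restricted to \<D> is an isomorphism on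
  hom-categories, i.e. bijective on 1-cells (onto 2-natural transformations) and on
  2-cells (onto modifications).\<close>

definition dense :: "('o, 'a, 'c, 'm) two_cat_scheme \<Rightarrow> 'o set \<Rightarrow> bool" where
  "dense K \<D> \<longleftrightarrow> \<D> \<subseteq> Ob K \<and>
    (\<forall>X\<in>Ob K. \<forall>Y\<in>Ob K.
      (\<forall>ao am. two_nat K \<D> X Y ao am \<longrightarrow>
         (\<exists>!f. f \<in> hom K X Y
            \<and> (\<forall>D\<in>\<D>. \<forall>u\<in>hom K D X. ao D u = comp1 K f u)
            \<and> (\<forall>D\<in>\<D>. \<forall>u\<in>hom K D X. \<forall>v\<in>hom K D X. \<forall>\<theta>\<in>cells K u v.
                 am D \<theta> = hcomp K (id2 K f) \<theta>)))
    \<and> (\<forall>f\<in>hom K X Y. \<forall>g\<in>hom K X Y. \<forall>\<Gamma>.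
         modification K \<D> X Y (\<lambda>D u. comp1 K f u) (\<lambda>D \<theta>. hcomp K (id2 K f) \<theta>)
                              (\<lambda>D u. comp1 K g u) (\<lambda>D \<theta>. hcomp K (id2 K g) \<theta>) \<Gamma> \<longrightarrow>
         (\<exists>!\<theta>. \<theta> \<in> cells K f g \<and> (\<forall>D\<in>\<D>. \<forall>u\<in>hom K D X. \<Gamma> D u = hcomp K \<theta> (id2 K u)))))"

definition left_lifting ::
  "('o, 'a, 'c, 'm) two_cat_scheme \<Rightarrow> 'a \<Rightarrow> 'a \<Rightarrow> 'a \<Rightarrow> 'c \<Rightarrow> bool" where
  "left_lifting K f g h \<phi> \<longleftrightarrow>
     \<phi> \<in> cells K f (comp1 K h g) \<and>
     (\<forall>k\<in>hom K (src1 K g) (tgt1 K g).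
        bij_betw (\<lambda>\<kappa>. vcomp K (hcomp K (id2 K h) \<kappa>) \<phi>) (cells K g k) (cells K f (comp1 K h k)))"

definition absolute_left_lifting ::
  "('o, 'a, 'c, 'm) two_cat_scheme \<Rightarrow> 'a \<Rightarrow> 'a \<Rightarrow> 'a \<Rightarrow> 'c \<Rightarrow> bool" where
  "absolute_left_lifting K f g h \<phi> \<longleftrightarrow>
     left_lifting K f g h \<phi> \<and>
     (\<forall>X\<in>Ob K. \<forall>j\<in>hom K X (src1 K g).
        left_lifting K (comp1 K f j) (comp1 K g j) h (hcomp K \<phi> (id2 K j)))"

end

theory Submission
  imports Defs
begin


locale tc =
  fixes K :: "('o, 'a, 'c, 'm) two_cat_scheme"
  assumes tc: "two_category K"
begin

lemma in_hom[simp]: "f \<in> hom K A B \<longleftrightarrow> f \<in> Arr K \<and> src1 K f = A \<and> tgt1 K f = B"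
  by (simp add: hom_def)
lemma in_cells[simp]: "\<theta> \<in> cells K p q \<longleftrightarrow> \<theta> \<in> Cel K \<and> dom2 K \<theta> = p \<and> cod2 K \<theta> = q"
  by (simp add: cells_def)

lemma ax_cel: "\<theta> \<in> Cel K \<Longrightarrow> dom2 K \<theta> \<in> Arr K \<and> cod2 K \<theta> \<in> Arr K
        \<and> src1 K (dom2 K \<theta>) = src1 K (cod2 K \<theta>) \<and> tgt1 K (dom2 K \<theta>) = tgt1 K (cod2 K \<theta>)"
  using tc[unfolded two_category_def, THEN conjunct2, THEN conjunct1] by blast

lemma ax_comp: "f \<in> hom K A B \<Longrightarrow> g \<in> hom K B C \<Longrightarrow> comp1 K g f \<in> hom K A C"
  using tc[unfolded two_category_def, THEN conjunct2, THEN conjunct2, THEN conjunct2, THEN conjunct1] by blast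

lemma ax_assoc: "f \<in> hom K A B \<Longrightarrow> g \<in> hom K B C \<Longrightarrow> h \<in> hom K C D \<Longrightarrow>
        comp1 K h (comp1 K g f) = comp1 K (comp1 K h g) f"
  using tc[unfolded two_category_def, THEN conjunct2, THEN conjunct2, THEN conjunct2, THEN conjunct2, THEN conjunct1] by blast

lemma ax_id1: "A \<in> Ob K \<Longrightarrow> id1 K A \<in> hom K A A"
  using tc[unfolded two_category_def, THEN conjunct2, THEN conjunct2, THEN conjunct1] by blast

lemma ax_unit: "f \<in> hom K A B \<Longrightarrow> comp1 K (id1 K B) f = f \<and> comp1 K f (id1 K A) = f"
  using tc[unfolded two_category_def, THEN conjunct2, THEN conjunct2, THEN conjunct2, THEN conjunct2, THEN conjunct2, THEN conjunct1] by blast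

lemma ax_id2: "f\<in>Arr K \<Longrightarrow> id2 K f \<in> cells K f f"
  using tc[unfolded two_category_def, THEN conjunct2, THEN conjunct2, THEN conjunct2, THEN conjunct2, THEN conjunct2, THEN conjunct2, THEN conjunct1] by blast

lemma ax_vcomp: "\<alpha> \<in> cells K f g \<Longrightarrow> \<beta> \<in> cells K g h \<Longrightarrow> vcomp K \<beta> \<alpha> \<in> cells K f h"
  using tc[unfolded two_category_def, THEN conjunct2, THEN conjunct2, THEN conjunct2, THEN conjunct2, THEN conjunct2, THEN conjunct2, THEN conjunct2, THEN conjunct1] by blast

lemma ax_vassoc: "\<alpha> \<in> cells K f g \<Longrightarrow> \<beta> \<in> cells K g h \<Longrightarrow> \<gamma> \<in> cells K h i \<Longrightarrow>
        vcomp K \<gamma> (vcomp K \<beta> \<alpha>) = vcomp K (vcomp K \<gamma> \<beta>) \<alpha>"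
  using tc[unfolded two_category_def, THEN conjunct2, THEN conjunct2, THEN conjunct2, THEN conjunct2, THEN conjunct2, THEN conjunct2, THEN conjunct2, THEN conjunct2, THEN conjunct1] by blast

lemma ax_vunit: "\<alpha> \<in> cells K f g \<Longrightarrow> vcomp K (id2 K g) \<alpha> = \<alpha> \<and> vcomp K \<alpha> (id2 K f) = \<alpha>"
  using tc[unfolded two_category_def, THEN conjunct2, THEN conjunct2, THEN conjunct2, THEN conjunct2, THEN conjunct2, THEN conjunct2, THEN conjunct2, THEN conjunct2, THEN conjunct2, THEN conjunct1] by blast

lemma ax_hcomp: "f \<in> hom K A B \<Longrightarrow> f' \<in> hom K A B \<Longrightarrow> g \<in> hom K B C \<Longrightarrow> g' \<in> hom K B C
        \<Longrightarrow> \<alpha> \<in> cells K f f' \<Longrightarrow> \<beta> \<in> cells K g g' \<Longrightarrow>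
        hcomp K \<beta> \<alpha> \<in> cells K (comp1 K g f) (comp1 K g' f')"
  using tc[unfolded two_category_def, THEN conjunct2, THEN conjunct2, THEN conjunct2, THEN conjunct2, THEN conjunct2, THEN conjunct2, THEN conjunct2, THEN conjunct2, THEN conjunct2, THEN conjunct2, THEN conjunct1] by blast

lemma ax_hid: "f \<in> hom K A B \<Longrightarrow> g \<in> hom K B C \<Longrightarrow>
        hcomp K (id2 K g) (id2 K f) = id2 K (comp1 K g f)"
  using tc[unfolded two_category_def, THEN conjunct2, THEN conjunct2, THEN conjunct2, THEN conjunct2, THEN conjunct2, THEN conjunct2, THEN conjunct2, THEN conjunct2, THEN conjunct2, THEN conjunct2, THEN conjunct2, THEN conjunct1] by blast

lemma ax_inter: "f \<in> hom K A B \<Longrightarrow> f' \<in> hom K A B \<Longrightarrow> f'' \<in> hom K A B \<Longrightarrow>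
        g \<in> hom K B C \<Longrightarrow> g' \<in> hom K B C \<Longrightarrow> g'' \<in> hom K B C \<Longrightarrow>
        \<alpha> \<in> cells K f f' \<Longrightarrow> \<alpha>' \<in> cells K f' f'' \<Longrightarrow>
        \<beta> \<in> cells K g g' \<Longrightarrow> \<beta>' \<in> cells K g' g'' \<Longrightarrow>
        hcomp K (vcomp K \<beta>' \<beta>) (vcomp K \<alpha>' \<alpha>) = vcomp K (hcomp K \<beta>' \<alpha>') (hcomp K \<beta> \<alpha>)"
  using tc[unfolded two_category_def, THEN conjunct2, THEN conjunct2, THEN conjunct2, THEN conjunct2, THEN conjunct2, THEN conjunct2, THEN conjunct2, THEN conjunct2, THEN conjunct2, THEN conjunct2, THEN conjunct2, THEN conjunct2, THEN conjunct1] by blast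

lemma ax_hassoc: "f \<in> hom K A B \<Longrightarrow> f' \<in> hom K A B \<Longrightarrow> g \<in> hom K B C \<Longrightarrow> g' \<in> hom K B C \<Longrightarrow>
        h \<in> hom K C D \<Longrightarrow> h' \<in> hom K C D \<Longrightarrow>
        \<alpha> \<in> cells K f f' \<Longrightarrow> \<beta> \<in> cells K g g' \<Longrightarrow> \<gamma> \<in> cells K h h' \<Longrightarrow>
        hcomp K \<gamma> (hcomp K \<beta> \<alpha>) = hcomp K (hcomp K \<gamma> \<beta>) \<alpha>"
  using tc[unfolded two_category_def, THEN conjunct2, THEN conjunct2, THEN conjunct2, THEN conjunct2, THEN conjunct2, THEN conjunct2, THEN conjunct2, THEN conjunct2, THEN conjunct2, THEN conjunct2, THEN conjunct2, THEN conjunct2, THEN conjunct2, THEN conjunct1] by blast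

lemma ax_hunit: "f \<in> hom K A B \<Longrightarrow> f' \<in> hom K A B \<Longrightarrow> \<alpha> \<in> cells K f f' \<Longrightarrow>
        hcomp K (id2 K (id1 K B)) \<alpha> = \<alpha> \<and> hcomp K \<alpha> (id2 K (id1 K A)) = \<alpha>"
  using tc[unfolded two_category_def, THEN conjunct2, THEN conjunct2, THEN conjunct2, THEN conjunct2, THEN conjunct2, THEN conjunct2, THEN conjunct2, THEN conjunct2, THEN conjunct2, THEN conjunct2, THEN conjunct2, THEN conjunct2, THEN conjunct2, THEN conjunct2] by blast


lemma cel_arr[simp]: "\<theta> \<in> Cel K \<Longrightarrow> dom2 K \<theta> \<in> Arr K" "\<theta> \<in> Cel K \<Longrightarrow> cod2 K \<theta> \<in> Arr K"
  "\<theta> \<in> Cel K \<Longrightarrow> src1 K (cod2 K \<theta>) = src1 K (dom2 K \<theta>)"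
  "\<theta> \<in> Cel K \<Longrightarrow> tgt1 K (cod2 K \<theta>) = tgt1 K (dom2 K \<theta>)"
  using ax_cel by auto

lemma comp_arr[simp]:
  assumes "f \<in> Arr K" "g \<in> Arr K" "src1 K g = tgt1 K f"
  shows "comp1 K g f \<in> Arr K" "src1 K (comp1 K g f) = src1 K f" "tgt1 K (comp1 K g f) = tgt1 K g"
  using ax_comp[of f "src1 K f" "tgt1 K f" g "tgt1 K g"] assms by auto

lemma assoc[simp]:
  assumes "f \<in> Arr K" "g \<in> Arr K" "h \<in> Arr K" "src1 K g = tgt1 K f" "src1 K h = tgt1 K g"
  shows "comp1 K (comp1 K h g) f = comp1 K h (comp1 K g f)"
  using ax_assoc[of f "src1 K f" "tgt1 K f" g "tgt1 K g" h "tgt1 K h"] assms by auto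

lemma id2_cel[simp]:
  assumes "f \<in> Arr K"
  shows "id2 K f \<in> Cel K" "dom2 K (id2 K f) = f" "cod2 K (id2 K f) = f"
  using ax_id2[OF assms] by auto

lemma vcomp_cel[simp]:
  assumes "\<alpha> \<in> Cel K" "\<beta> \<in> Cel K" "dom2 K \<beta> = cod2 K \<alpha>"
  shows "vcomp K \<beta> \<alpha> \<in> Cel K" "dom2 K (vcomp K \<beta> \<alpha>) = dom2 K \<alpha>" "cod2 K (vcomp K \<beta> \<alpha>) = cod2 K \<beta>"
  using ax_vcomp[of \<alpha> "dom2 K \<alpha>" "cod2 K \<alpha>" \<beta> "cod2 K \<beta>"] assms by auto

lemma vassoc:
  assumes "\<alpha> \<in> Cel K" "\<beta> \<in> Cel K" "\<gamma> \<in> Cel K" "dom2 K \<beta> = cod2 K \<alpha>" "dom2 K \<gamma> = cod2 K \<beta>"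
  shows "vcomp K (vcomp K \<gamma> \<beta>) \<alpha> = vcomp K \<gamma> (vcomp K \<beta> \<alpha>)"
  using ax_vassoc[of \<alpha> "dom2 K \<alpha>" "cod2 K \<alpha>" \<beta> "cod2 K \<beta>" \<gamma> "cod2 K \<gamma>"] assms by auto

lemma vunit[simp]:
  assumes "\<alpha> \<in> Cel K"
  shows "vcomp K (id2 K (cod2 K \<alpha>)) \<alpha> = \<alpha>" "vcomp K \<alpha> (id2 K (dom2 K \<alpha>)) = \<alpha>"
  using ax_vunit[of \<alpha> "dom2 K \<alpha>" "cod2 K \<alpha>"] assms by auto

lemma hcomp_cel[simp]:
  assumes "\<alpha> \<in> Cel K" "\<beta> \<in> Cel K" "src1 K (dom2 K \<beta>) = tgt1 K (dom2 K \<alpha>)"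
  shows "hcomp K \<beta> \<alpha> \<in> Cel K" "dom2 K (hcomp K \<beta> \<alpha>) = comp1 K (dom2 K \<beta>) (dom2 K \<alpha>)"
    "cod2 K (hcomp K \<beta> \<alpha>) = comp1 K (cod2 K \<beta>) (cod2 K \<alpha>)"
  using ax_hcomp[of "dom2 K \<alpha>" "src1 K (dom2 K \<alpha>)" "tgt1 K (dom2 K \<alpha>)" "cod2 K \<alpha>"
     "dom2 K \<beta>" "tgt1 K (dom2 K \<beta>)" "cod2 K \<beta>" \<alpha> \<beta>] assms by auto

lemma hid[simp]:
  assumes "f \<in> Arr K" "g \<in> Arr K" "src1 K g = tgt1 K f"
  shows "hcomp K (id2 K g) (id2 K f) = id2 K (comp1 K g f)"
  using ax_hid[of f "src1 K f" "tgt1 K f" g "tgt1 K g"] assms by auto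

lemma inter:
  assumes "\<alpha> \<in> Cel K" "\<alpha>' \<in> Cel K" "\<beta> \<in> Cel K" "\<beta>' \<in> Cel K"
    "dom2 K \<alpha>' = cod2 K \<alpha>" "dom2 K \<beta>' = cod2 K \<beta>" "src1 K (dom2 K \<beta>) = tgt1 K (dom2 K \<alpha>)"
  shows "hcomp K (vcomp K \<beta>' \<beta>) (vcomp K \<alpha>' \<alpha>) = vcomp K (hcomp K \<beta>' \<alpha>') (hcomp K \<beta> \<alpha>)"
  using ax_inter[of "dom2 K \<alpha>" "src1 K (dom2 K \<alpha>)" "tgt1 K (dom2 K \<alpha>)" "cod2 K \<alpha>" "cod2 K \<alpha>'"
     "dom2 K \<beta>" "tgt1 K (dom2 K \<beta>)" "cod2 K \<beta>" "cod2 K \<beta>'" \<alpha> \<alpha>' \<beta> \<beta>'] assms by auto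

lemma hassoc:
  assumes "\<alpha> \<in> Cel K" "\<beta> \<in> Cel K" "\<gamma> \<in> Cel K"
    "src1 K (dom2 K \<beta>) = tgt1 K (dom2 K \<alpha>)" "src1 K (dom2 K \<gamma>) = tgt1 K (dom2 K \<beta>)"
  shows "hcomp K (hcomp K \<gamma> \<beta>) \<alpha> = hcomp K \<gamma> (hcomp K \<beta> \<alpha>)"
  using ax_hassoc[of "dom2 K \<alpha>" "src1 K (dom2 K \<alpha>)" "tgt1 K (dom2 K \<alpha>)" "cod2 K \<alpha>"
     "dom2 K \<beta>" "tgt1 K (dom2 K \<beta>)" "cod2 K \<beta>" "dom2 K \<gamma>" "tgt1 K (dom2 K \<gamma>)" "cod2 K \<gamma>" \<alpha> \<beta> \<gamma>] assms by auto

lemma hunit_r: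
  assumes "\<alpha> \<in> Cel K" "A = src1 K (dom2 K \<alpha>)"
  shows "hcomp K \<alpha> (id2 K (id1 K A)) = \<alpha>"
  using ax_hunit[of "dom2 K \<alpha>" A "tgt1 K (dom2 K \<alpha>)" "cod2 K \<alpha>" \<alpha>] assms by auto

lemma unit_r:
  assumes "f \<in> Arr K" "A = src1 K f"
  shows "comp1 K f (id1 K A) = f"
  using ax_unit[of f A "tgt1 K f"] assms by auto

lemma id1_arr:
  assumes "A \<in> Ob K"
  shows "id1 K A \<in> Arr K" "src1 K (id1 K A) = A" "tgt1 K (id1 K A) = A"
  using ax_id1[OF assms] by auto

lemma whisk_r_vcomp:
  assumes "\<alpha> \<in> Cel K" "\<beta> \<in> Cel K" "dom2 K \<beta> = cod2 K \<alpha>" "u \<in> Arr K" "src1 K (dom2 K \<alpha>) = tgt1 K u"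
  shows "hcomp K (vcomp K \<beta> \<alpha>) (id2 K u) = vcomp K (hcomp K \<beta> (id2 K u)) (hcomp K \<alpha> (id2 K u))"
proof -
  have "hcomp K (vcomp K \<beta> \<alpha>) (id2 K u) = hcomp K (vcomp K \<beta> \<alpha>) (vcomp K (id2 K u) (id2 K u))"
    using vunit(1)[of "id2 K u"] assms by simp
  also have "\<dots> = vcomp K (hcomp K \<beta> (id2 K u)) (hcomp K \<alpha> (id2 K u))"
    by (rule inter) (use assms in simp_all)
  finally show ?thesis .
qed

lemma whisk_l_vcomp:
  assumes "\<alpha> \<in> Cel K" "\<beta> \<in> Cel K" "dom2 K \<beta> = cod2 K \<alpha>" "h \<in> Arr K" "src1 K h = tgt1 K (dom2 K \<alpha>)"
  shows "hcomp K (id2 K h) (vcomp K \<beta> \<alpha>) = vcomp K (hcomp K (id2 K h) \<beta>) (hcomp K (id2 K h) \<alpha>)"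
proof -
  have "hcomp K (id2 K h) (vcomp K \<beta> \<alpha>) = hcomp K (vcomp K (id2 K h) (id2 K h)) (vcomp K \<beta> \<alpha>)"
    using vunit(1)[of "id2 K h"] assms by simp
  also have "\<dots> = vcomp K (hcomp K (id2 K h) \<beta>) (hcomp K (id2 K h) \<alpha>)"
    by (rule inter) (use assms in simp_all)
  finally show ?thesis .
qed

lemma xchg1:
  assumes "\<alpha> \<in> Cel K" "\<beta> \<in> Cel K" "src1 K (dom2 K \<beta>) = tgt1 K (dom2 K \<alpha>)"
  shows "vcomp K (hcomp K \<beta> (id2 K (cod2 K \<alpha>))) (hcomp K (id2 K (dom2 K \<beta>)) \<alpha>) = hcomp K \<beta> \<alpha>"
proof -
  have "hcomp K \<beta> \<alpha> = hcomp K (vcomp K \<beta> (id2 K (dom2 K \<beta>))) (vcomp K (id2 K (cod2 K \<alpha>)) \<alpha>)"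
    using assms by simp
  also have "\<dots> = vcomp K (hcomp K \<beta> (id2 K (cod2 K \<alpha>))) (hcomp K (id2 K (dom2 K \<beta>)) \<alpha>)"
    by (rule inter) (use assms in simp_all)
  finally show ?thesis by simp
qed

lemma xchg2:
  assumes "\<alpha> \<in> Cel K" "\<beta> \<in> Cel K" "src1 K (dom2 K \<beta>) = tgt1 K (dom2 K \<alpha>)"
  shows "vcomp K (hcomp K (id2 K (cod2 K \<beta>)) \<alpha>) (hcomp K \<beta> (id2 K (dom2 K \<alpha>))) = hcomp K \<beta> \<alpha>"
proof -
  have "hcomp K \<beta> \<alpha> = hcomp K (vcomp K (id2 K (cod2 K \<beta>)) \<beta>) (vcomp K \<alpha> (id2 K (dom2 K \<alpha>)))"
    using assms by simp
  also have "\<dots> = vcomp K (hcomp K (id2 K (cod2 K \<beta>)) \<alpha>) (hcomp K \<beta> (id2 K (dom2 K \<alpha>)))"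
    by (rule inter) (use assms in simp_all)
  finally show ?thesis by simp
qed

lemma whisk_whisk:
  assumes "\<theta> \<in> Cel K" "u \<in> Arr K" "d \<in> Arr K" "src1 K (dom2 K \<theta>) = tgt1 K u" "src1 K u = tgt1 K d"
  shows "hcomp K (hcomp K \<theta> (id2 K u)) (id2 K d) = hcomp K \<theta> (id2 K (comp1 K u d))"
  using hassoc[of "id2 K d" "id2 K u" \<theta>] assms by simp

lemma whisk_lr:
  assumes "\<kappa> \<in> Cel K" "u \<in> Arr K" "h \<in> Arr K" "src1 K (dom2 K \<kappa>) = tgt1 K u" "src1 K h = tgt1 K (dom2 K \<kappa>)"
  shows "hcomp K (id2 K h) (hcomp K \<kappa> (id2 K u)) = hcomp K (hcomp K (id2 K h) \<kappa>) (id2 K u)"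
  using hassoc[of "id2 K u" \<kappa> "id2 K h"] assms by simp

lemma whisk_ll:
  assumes "\<kappa> \<in> Cel K" "k \<in> Arr K" "h \<in> Arr K" "src1 K k = tgt1 K (dom2 K \<kappa>)" "src1 K h = tgt1 K k"
  shows "hcomp K (id2 K h) (hcomp K (id2 K k) \<kappa>) = hcomp K (id2 K (comp1 K h k)) \<kappa>"
  using hassoc[of \<kappa> "id2 K k" "id2 K h"] assms by simp


lemma whisk_mod:
  assumes "p \<in> hom K X Y" "q \<in> hom K X Y" "\<theta> \<in> cells K p q"
  shows "modification K \<D> X Y (\<lambda>D u. comp1 K p u) (\<lambda>D \<theta>'. hcomp K (id2 K p) \<theta>')
           (\<lambda>D u. comp1 K q u) (\<lambda>D \<theta>'. hcomp K (id2 K q) \<theta>') (\<lambda>D u. hcomp K \<theta> (id2 K u))"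
  unfolding modification_def
proof (intro conjI ballI)
  fix D u assume "D \<in> \<D>" "u \<in> hom K D X"
  then show "hcomp K \<theta> (id2 K u) \<in> cells K (comp1 K p u) (comp1 K q u)" using assms by simp
next
  fix D u v \<theta>' assume "D \<in> \<D>" "u \<in> hom K D X" "v \<in> hom K D X" "\<theta>' \<in> cells K u v"
  then have "vcomp K (hcomp K (id2 K q) \<theta>') (hcomp K \<theta> (id2 K u)) = hcomp K \<theta> \<theta>'"
    using xchg2[of \<theta>' \<theta>] assms by simp
  moreover have "vcomp K (hcomp K \<theta> (id2 K v)) (hcomp K (id2 K p) \<theta>') = hcomp K \<theta> \<theta>'"
    using xchg1[of \<theta>' \<theta>] assms \<open>\<theta>' \<in> cells K u v\<close> \<open>u \<in> hom K D X\<close> \<open>v \<in> hom K D X\<close> by simp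
  ultimately show "vcomp K (hcomp K (id2 K q) \<theta>') (hcomp K \<theta> (id2 K u)) =
       vcomp K (hcomp K \<theta> (id2 K v)) (hcomp K (id2 K p) \<theta>')" by simp
next
  fix D D' d u assume "D \<in> \<D>" "D' \<in> \<D>" "d \<in> hom K D' D" "u \<in> hom K D X"
  then show "hcomp K \<theta> (id2 K (comp1 K u d)) = hcomp K (hcomp K \<theta> (id2 K u)) (id2 K d)"
    using whisk_whisk[of \<theta> u d] assms by simp
qed

lemma dense_2cell:
  assumes "dense K \<D>" "X \<in> Ob K" "Y \<in> Ob K" "p \<in> hom K X Y" "q \<in> hom K X Y"
    "modification K \<D> X Y (\<lambda>D u. comp1 K p u) (\<lambda>D \<theta>'. hcomp K (id2 K p) \<theta>')
           (\<lambda>D u. comp1 K q u) (\<lambda>D \<theta>'. hcomp K (id2 K q) \<theta>') \<Gamma>"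
  shows "\<exists>!\<theta>. \<theta> \<in> cells K p q \<and> (\<forall>D\<in>\<D>. \<forall>u\<in>hom K D X. \<Gamma> D u = hcomp K \<theta> (id2 K u))"
using conjunct2[OF bspec[OF bspec[OF conjunct2[OF assms(1)[unfolded dense_def]] assms(2)] assms(3)], rule_format, OF assms(4,5,6)] .

lemma dense_uniq:
  assumes "dense K \<D>" "X \<in> Ob K" "Y \<in> Ob K" "p \<in> hom K X Y" "q \<in> hom K X Y"
    "\<theta>1 \<in> cells K p q" "\<theta>2 \<in> cells K p q"
    "\<forall>D\<in>\<D>. \<forall>u\<in>hom K D X. hcomp K \<theta>1 (id2 K u) = hcomp K \<theta>2 (id2 K u)"
  shows "\<theta>1 = \<theta>2"
  using dense_2cell[OF assms(1-5) whisk_mod[OF assms(4,5,6)]] assms(6-8) by metis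

end


locale ctx = tc K for K :: "('o, 'a, 'c, 'm) two_cat_scheme" +
  fixes \<D> :: "'o set" and A B C f g h \<phi>
  assumes dense: "dense K \<D>"
    and obA: "A \<in> Ob K" and obB: "B \<in> Ob K" and obC: "C \<in> Ob K"
    and f: "f \<in> hom K A C" and g: "g \<in> hom K A B" and h: "h \<in> hom K B C"
    and \<phi>: "\<phi> \<in> cells K f (comp1 K h g)"
    and hyp: "\<forall>D\<in>\<D>. \<forall>a\<in>hom K D A.
           left_lifting K (comp1 K f a) (comp1 K g a) h (hcomp K \<phi> (id2 K a))"
begin

abbreviation LL where "LL a \<kappa> \<equiv> vcomp K (hcomp K (id2 K h) \<kappa>) (hcomp K \<phi> (id2 K a))"

lemma fa[simp]: "f \<in> Arr K" "src1 K f = A" "tgt1 K f = C" using f by auto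
lemma ga[simp]: "g \<in> Arr K" "src1 K g = A" "tgt1 K g = B" using g by auto
lemma ha[simp]: "h \<in> Arr K" "src1 K h = B" "tgt1 K h = C" using h by auto
lemma \<phi>a[simp]: "\<phi> \<in> Cel K" "dom2 K \<phi> = f" "cod2 K \<phi> = comp1 K h g" using \<phi> by auto

lemma W:
  assumes "\<kappa> \<in> Cel K" "dom2 K \<kappa> = comp1 K g a" "a \<in> Arr K" "tgt1 K a = A" "d \<in> Arr K" "tgt1 K d = src1 K a"
  shows "hcomp K (LL a \<kappa>) (id2 K d) = LL (comp1 K a d) (hcomp K \<kappa> (id2 K d))"
proof -
  have "hcomp K (LL a \<kappa>) (id2 K d) =
     vcomp K (hcomp K (hcomp K (id2 K h) \<kappa>) (id2 K d)) (hcomp K (hcomp K \<phi> (id2 K a)) (id2 K d))"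
    by (rule whisk_r_vcomp) (use assms in simp_all)
  also have "hcomp K (hcomp K (id2 K h) \<kappa>) (id2 K d) = hcomp K (id2 K h) (hcomp K \<kappa> (id2 K d))"
    by (rule whisk_lr[symmetric]) (use assms in simp_all)
  also have "hcomp K (hcomp K \<phi> (id2 K a)) (id2 K d) = hcomp K \<phi> (id2 K (comp1 K a d))"
    by (rule whisk_whisk) (use assms in simp_all)
  finally show ?thesis .
qed

lemma lift:
  assumes "D \<in> \<D>" "a \<in> hom K D A" "k \<in> hom K D B"
  shows "bij_betw (LL a) (cells K (comp1 K g a) k) (cells K (comp1 K f a) (comp1 K h k))"
proof -
  have "left_lifting K (comp1 K f a) (comp1 K g a) h (hcomp K \<phi> (id2 K a))"
    using hyp assms by blast
  moreover have "k \<in> hom K (src1 K (comp1 K g a)) (tgt1 K (comp1 K g a))" using assms by simp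
  ultimately show ?thesis unfolding left_lifting_def by blast
qed

lemma lift_ex1:
  assumes "D \<in> \<D>" "a \<in> hom K D A" "k \<in> hom K D B" "\<psi> \<in> cells K (comp1 K f a) (comp1 K h k)"
  shows "\<exists>!\<kappa>. \<kappa> \<in> cells K (comp1 K g a) k \<and> LL a \<kappa> = \<psi>"
proof -
  note b = lift[OF assms(1-3)]
  from assms(4) b have "\<psi> \<in> LL a ` cells K (comp1 K g a) k"
    unfolding bij_betw_def by (simp only:)
  then obtain \<kappa> where "\<kappa> \<in> cells K (comp1 K g a) k" "LL a \<kappa> = \<psi>"
    by (rule imageE) (rule that, assumption, rule sym)
  moreover have "\<kappa>' = \<kappa>" if "\<kappa>' \<in> cells K (comp1 K g a) k" "LL a \<kappa>' = \<psi>" for \<kappa>'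
  proof -
    have e: "LL a \<kappa>' = LL a \<kappa>" using that(2) calculation(2) by simp
    show ?thesis by (rule inj_onD[OF bij_betw_imp_inj_on[OF b] e that(1) calculation(1)])
  qed
  ultimately show ?thesis by blast
qed

lemma D_ob: "D \<in> \<D> \<Longrightarrow> D \<in> Ob K" using dense unfolding dense_def by blast

lemma main_bij:
  assumes X: "X \<in> Ob K" and j: "j \<in> hom K X A" and k: "k \<in> hom K X B"
  shows "bij_betw (LL j) (cells K (comp1 K g j) k) (cells K (comp1 K f j) (comp1 K h k))"
  unfolding bij_betw_def
proof (intro conjI)
  have ja[simp]: "j \<in> Arr K" "src1 K j = X" "tgt1 K j = A" using j by auto
  have ka[simp]: "k \<in> Arr K" "src1 K k = X" "tgt1 K k = B" using k by auto
  show "inj_on (LL j) (cells K (comp1 K g j) k)"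
  proof (rule inj_onI)
    fix \<kappa>1 \<kappa>2 assume k1: "\<kappa>1 \<in> cells K (comp1 K g j) k" and k2: "\<kappa>2 \<in> cells K (comp1 K g j) k"
      and eq: "LL j \<kappa>1 = LL j \<kappa>2"
    show "\<kappa>1 = \<kappa>2"
    proof (rule dense_uniq[OF dense X obB _ k k1 k2])
      show "comp1 K g j \<in> hom K X B" by simp
      show "\<forall>D\<in>\<D>. \<forall>u\<in>hom K D X. hcomp K \<kappa>1 (id2 K u) = hcomp K \<kappa>2 (id2 K u)"
      proof (intro ballI)
        fix D u assume D: "D \<in> \<D>" and u: "u \<in> hom K D X"
        have ua[simp]: "u \<in> Arr K" "src1 K u = D" "tgt1 K u = X" using u by auto
        have "LL (comp1 K j u) (hcomp K \<kappa>1 (id2 K u)) = hcomp K (LL j \<kappa>1) (id2 K u)"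
          by (rule W[symmetric]) (use k1 in simp_all)
        also have "\<dots> = hcomp K (LL j \<kappa>2) (id2 K u)" using eq by simp
        also have "\<dots> = LL (comp1 K j u) (hcomp K \<kappa>2 (id2 K u))"
          by (rule W) (use k2 in simp_all)
        finally have e: "LL (comp1 K j u) (hcomp K \<kappa>1 (id2 K u)) = LL (comp1 K j u) (hcomp K \<kappa>2 (id2 K u))" .
        have "D \<in> Ob K" using D dense unfolding dense_def by blast
        have b: "bij_betw (LL (comp1 K j u)) (cells K (comp1 K g (comp1 K j u)) (comp1 K k u))
               (cells K (comp1 K f (comp1 K j u)) (comp1 K h (comp1 K k u)))"
          by (rule lift[OF D]) simp_all
        show "hcomp K \<kappa>1 (id2 K u) = hcomp K \<kappa>2 (id2 K u)"
          using bij_betw_imp_inj_on[OF b] e k1 k2 by (simp add: inj_on_def)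
      qed
    qed
  qed
  show "LL j ` cells K (comp1 K g j) k = cells K (comp1 K f j) (comp1 K h k)"
  proof (rule set_eqI, rule iffI)
    fix \<psi> assume "\<psi> \<in> LL j ` cells K (comp1 K g j) k"
    then show "\<psi> \<in> cells K (comp1 K f j) (comp1 K h k)" by auto
  next
    fix \<psi> assume \<psi>: "\<psi> \<in> cells K (comp1 K f j) (comp1 K h k)"
    have \<psi>a[simp]: "\<psi> \<in> Cel K" "dom2 K \<psi> = comp1 K f j" "cod2 K \<psi> = comp1 K h k" using \<psi> by auto
    define \<Gamma> where "\<Gamma> D u = (THE \<kappa>. \<kappa> \<in> cells K (comp1 K g (comp1 K j u)) (comp1 K k u)
         \<and> LL (comp1 K j u) \<kappa> = hcomp K \<psi> (id2 K u))" for D :: 'o and u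
    have ex1: "\<exists>!\<kappa>. \<kappa> \<in> cells K (comp1 K g (comp1 K j u)) (comp1 K k u)
         \<and> LL (comp1 K j u) \<kappa> = hcomp K \<psi> (id2 K u)" if "D \<in> \<D>" "u \<in> hom K D X" for D u
      by (rule lift_ex1[OF that(1)]) (use that in simp_all)
    have G: "\<Gamma> D u \<in> cells K (comp1 K g (comp1 K j u)) (comp1 K k u)
         \<and> LL (comp1 K j u) (\<Gamma> D u) = hcomp K \<psi> (id2 K u)" if "D \<in> \<D>" "u \<in> hom K D X" for D u
      unfolding \<Gamma>_def by (rule theI'[OF ex1[OF that]])
    have G3: "\<kappa> = \<Gamma> D u" if "D \<in> \<D>" "u \<in> hom K D X" "\<kappa> \<in> cells K (comp1 K g (comp1 K j u)) (comp1 K k u)"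
        "LL (comp1 K j u) \<kappa> = hcomp K \<psi> (id2 K u)" for D u \<kappa>
      unfolding \<Gamma>_def by (rule the1_equality[OF ex1[OF that(1,2)], symmetric]) (use that in simp)
    have "modification K \<D> X B (\<lambda>D u. comp1 K (comp1 K g j) u) (\<lambda>D \<theta>'. hcomp K (id2 K (comp1 K g j)) \<theta>')
           (\<lambda>D u. comp1 K k u) (\<lambda>D \<theta>'. hcomp K (id2 K k) \<theta>') \<Gamma>"
      unfolding modification_def
    proof (intro conjI ballI)
      fix D u assume D: "D \<in> \<D>" and u: "u \<in> hom K D X"
      then show "\<Gamma> D u \<in> cells K (comp1 K (comp1 K g j) u) (comp1 K k u)" using G[OF D u] by simp
    next
      fix D u v \<theta>' assume D: "D \<in> \<D>" and u: "u \<in> hom K D X" and v: "v \<in> hom K D X"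
        and \<theta>': "\<theta>' \<in> cells K u v"
      have ua[simp]: "u \<in> Arr K" "src1 K u = D" "tgt1 K u = X" using u by auto
      have va[simp]: "v \<in> Arr K" "src1 K v = D" "tgt1 K v = X" using v by auto
      have \<theta>a[simp]: "\<theta>' \<in> Cel K" "dom2 K \<theta>' = u" "cod2 K \<theta>' = v" using \<theta>' by auto
      have Gu[simp]: "\<Gamma> D u \<in> Cel K" "dom2 K (\<Gamma> D u) = comp1 K g (comp1 K j u)" "cod2 K (\<Gamma> D u) = comp1 K k u"
        using G[OF D u] by auto
      have Gv[simp]: "\<Gamma> D v \<in> Cel K" "dom2 K (\<Gamma> D v) = comp1 K g (comp1 K j v)" "cod2 K (\<Gamma> D v) = comp1 K k v"
        using G[OF D v] by auto
      have Gu2: "LL (comp1 K j u) (\<Gamma> D u) = hcomp K \<psi> (id2 K u)" using G[OF D u] by blast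
      have Gv2: "LL (comp1 K j v) (\<Gamma> D v) = hcomp K \<psi> (id2 K v)" using G[OF D v] by blast
      let ?a = "comp1 K j u"
      have L: "LL ?a (vcomp K (hcomp K (id2 K k) \<theta>') (\<Gamma> D u)) = hcomp K \<psi> \<theta>'"
      proof -
        have "LL ?a (vcomp K (hcomp K (id2 K k) \<theta>') (\<Gamma> D u)) =
          vcomp K (vcomp K (hcomp K (id2 K h) (hcomp K (id2 K k) \<theta>')) (hcomp K (id2 K h) (\<Gamma> D u))) (hcomp K \<phi> (id2 K ?a))"
          by (subst whisk_l_vcomp) simp_all
        also have "\<dots> = vcomp K (hcomp K (id2 K h) (hcomp K (id2 K k) \<theta>')) (LL ?a (\<Gamma> D u))"
          by (rule vassoc) simp_all
        also have "\<dots> = vcomp K (hcomp K (id2 K (comp1 K h k)) \<theta>') (hcomp K \<psi> (id2 K u))"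
          using Gu2 whisk_ll[of \<theta>' k h] by simp
        also have "\<dots> = hcomp K \<psi> \<theta>'"
          using xchg2[of \<theta>' \<psi>] by simp
        finally show ?thesis .
      qed
      have R: "LL ?a (vcomp K (\<Gamma> D v) (hcomp K (id2 K (comp1 K g j)) \<theta>')) = hcomp K \<psi> \<theta>'"
      proof -
        let ?\<phi>j = "hcomp K \<phi> (id2 K j)"
        have "LL ?a (vcomp K (\<Gamma> D v) (hcomp K (id2 K (comp1 K g j)) \<theta>')) =
          vcomp K (vcomp K (hcomp K (id2 K h) (\<Gamma> D v)) (hcomp K (id2 K h) (hcomp K (id2 K (comp1 K g j)) \<theta>'))) (hcomp K \<phi> (id2 K ?a))"
          by (subst whisk_l_vcomp) simp_all
        also have "\<dots> = vcomp K (hcomp K (id2 K h) (\<Gamma> D v)) (vcomp K (hcomp K (id2 K h) (hcomp K (id2 K (comp1 K g j)) \<theta>')) (hcomp K \<phi> (id2 K ?a)))"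
          by (rule vassoc) simp_all
        also have "vcomp K (hcomp K (id2 K h) (hcomp K (id2 K (comp1 K g j)) \<theta>')) (hcomp K \<phi> (id2 K ?a))
            = vcomp K (hcomp K (id2 K (cod2 K ?\<phi>j)) \<theta>') (hcomp K ?\<phi>j (id2 K (dom2 K \<theta>')))"
          using whisk_ll[of \<theta>' "comp1 K g j" h] whisk_whisk[of \<phi> j u] by simp
        also have "\<dots> = hcomp K ?\<phi>j \<theta>'"
          by (rule xchg2) simp_all
        also have "\<dots> = vcomp K (hcomp K ?\<phi>j (id2 K (cod2 K \<theta>'))) (hcomp K (id2 K (dom2 K ?\<phi>j)) \<theta>')"
          by (rule xchg1[symmetric]) simp_all
        also have "\<dots> = vcomp K (hcomp K \<phi> (id2 K (comp1 K j v))) (hcomp K (id2 K (comp1 K f j)) \<theta>')"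
          using whisk_whisk[of \<phi> j v] by simp
        also have "vcomp K (hcomp K (id2 K h) (\<Gamma> D v)) (vcomp K (hcomp K \<phi> (id2 K (comp1 K j v))) (hcomp K (id2 K (comp1 K f j)) \<theta>'))
           = vcomp K (LL (comp1 K j v) (\<Gamma> D v)) (hcomp K (id2 K (comp1 K f j)) \<theta>')"
          by (rule vassoc[symmetric]) simp_all
        also have "\<dots> = vcomp K (hcomp K \<psi> (id2 K (cod2 K \<theta>'))) (hcomp K (id2 K (dom2 K \<psi>)) \<theta>')"
          using Gv2 by simp
        also have "\<dots> = hcomp K \<psi> \<theta>'"
          by (rule xchg1) simp_all
        finally show ?thesis .
      qed
      have b: "bij_betw (LL ?a) (cells K (comp1 K g ?a) (comp1 K k v))
               (cells K (comp1 K f ?a) (comp1 K h (comp1 K k v)))"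
        by (rule lift[OF D]) simp_all
      show "vcomp K (hcomp K (id2 K k) \<theta>') (\<Gamma> D u) = vcomp K (\<Gamma> D v) (hcomp K (id2 K (comp1 K g j)) \<theta>')"
        by (rule inj_onD[OF bij_betw_imp_inj_on[OF b]]) (use L R in simp_all)
    next
      fix D D' d u assume D: "D \<in> \<D>" and D': "D' \<in> \<D>" and d: "d \<in> hom K D' D" and u: "u \<in> hom K D X"
      have ua[simp]: "u \<in> Arr K" "src1 K u = D" "tgt1 K u = X" using u by auto
      have da[simp]: "d \<in> Arr K" "src1 K d = D'" "tgt1 K d = D" using d by auto
      have Gu[simp]: "\<Gamma> D u \<in> Cel K" "dom2 K (\<Gamma> D u) = comp1 K g (comp1 K j u)" "cod2 K (\<Gamma> D u) = comp1 K k u"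
        using G[OF D u] by auto
      have Gu2: "LL (comp1 K j u) (\<Gamma> D u) = hcomp K \<psi> (id2 K u)" using G[OF D u] by blast
      have ud: "comp1 K u d \<in> hom K D' X" by simp
      have "LL (comp1 K (comp1 K j u) d) (hcomp K (\<Gamma> D u) (id2 K d)) = hcomp K (LL (comp1 K j u) (\<Gamma> D u)) (id2 K d)"
        by (rule W[symmetric]) simp_all
      also have "\<dots> = hcomp K \<psi> (id2 K (comp1 K u d))"
        using Gu2 whisk_whisk[of \<psi> u d] by simp
      finally have e: "LL (comp1 K j (comp1 K u d)) (hcomp K (\<Gamma> D u) (id2 K d)) = hcomp K \<psi> (id2 K (comp1 K u d))"
        by simp
      show "\<Gamma> D' (comp1 K u d) = hcomp K (\<Gamma> D u) (id2 K d)"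
        by (rule G3[OF D' ud, symmetric]) (use e in simp_all)
    qed
    moreover have gj: "comp1 K g j \<in> hom K X B" by simp
    ultimately have "\<exists>!\<theta>. \<theta> \<in> cells K (comp1 K g j) k \<and> (\<forall>D\<in>\<D>. \<forall>u\<in>hom K D X. \<Gamma> D u = hcomp K \<theta> (id2 K u))"
      using dense_2cell[OF dense X obB gj k] by blast
    then obtain \<theta> where \<theta>: "\<theta> \<in> cells K (comp1 K g j) k"
      and \<theta>G: "\<forall>D\<in>\<D>. \<forall>u\<in>hom K D X. \<Gamma> D u = hcomp K \<theta> (id2 K u)"
      by (meson ex1_implies_ex)
    have "LL j \<theta> = \<psi>"
    proof (rule dense_uniq[OF dense X obC _ _ _ \<psi>])
      show "comp1 K f j \<in> hom K X C" "comp1 K h k \<in> hom K X C" by simp_all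
      show "LL j \<theta> \<in> cells K (comp1 K f j) (comp1 K h k)" using \<theta> by simp
      show "\<forall>D\<in>\<D>. \<forall>u\<in>hom K D X. hcomp K (LL j \<theta>) (id2 K u) = hcomp K \<psi> (id2 K u)"
      proof (intro ballI)
        fix D u assume D: "D \<in> \<D>" and u: "u \<in> hom K D X"
        have ua[simp]: "u \<in> Arr K" "src1 K u = D" "tgt1 K u = X" using u by auto
        have "hcomp K (LL j \<theta>) (id2 K u) = LL (comp1 K j u) (hcomp K \<theta> (id2 K u))"
          by (rule W) (use \<theta> in simp_all)
        also have "\<dots> = LL (comp1 K j u) (\<Gamma> D u)" using \<theta>G D u by simp
        also have "\<dots> = hcomp K \<psi> (id2 K u)" using G[OF D u] by blast
        finally show "hcomp K (LL j \<theta>) (id2 K u) = hcomp K \<psi> (id2 K u)" .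
      qed
    qed
    then show "\<psi> \<in> LL j ` cells K (comp1 K g j) k" using \<theta> by blast
  qed
qed


lemma ll_all:
  assumes X: "X \<in> Ob K" and j: "j \<in> hom K X A"
  shows "left_lifting K (comp1 K f j) (comp1 K g j) h (hcomp K \<phi> (id2 K j))"
  unfolding left_lifting_def
proof (intro conjI ballI)
  show "hcomp K \<phi> (id2 K j) \<in> cells K (comp1 K f j) (comp1 K h (comp1 K g j))" using j by simp
  fix k assume "k \<in> hom K (src1 K (comp1 K g j)) (tgt1 K (comp1 K g j))"
  then have k: "k \<in> hom K X B" using j by simp
  show "bij_betw (\<lambda>\<kappa>. LL j \<kappa>) (cells K (comp1 K g j) k) (cells K (comp1 K f j) (comp1 K h k))"
    using main_bij[OF X j k] by simp
qed

lemma absolute: "absolute_left_lifting K f g h \<phi>"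
  unfolding absolute_left_lifting_def
proof (intro conjI ballI)
  have i: "id1 K A \<in> hom K A A" using id1_arr[OF obA] by simp
  have "left_lifting K (comp1 K f (id1 K A)) (comp1 K g (id1 K A)) h (hcomp K \<phi> (id2 K (id1 K A)))"
    by (rule ll_all[OF obA i])
  moreover have "comp1 K f (id1 K A) = f" "comp1 K g (id1 K A) = g" "hcomp K \<phi> (id2 K (id1 K A)) = \<phi>"
    by (simp_all add: unit_r hunit_r)
  ultimately show "left_lifting K f g h \<phi>" by simp
next
  fix X j assume "X \<in> Ob K" "j \<in> hom K X (src1 K g)"
  then show "left_lifting K (comp1 K f j) (comp1 K g j) h (hcomp K \<phi> (id2 K j))"
    using ll_all by simp
qed

end

theorem lemma7p1:
  fixes K :: "('o, 'a, 'c, 'm) two_cat_scheme"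
    and \<D> :: "'o set"
  assumes "two_category K"
    and "dense K \<D>"
    and "A \<in> Ob K" and "B \<in> Ob K" and "C \<in> Ob K"
    and "f \<in> hom K A C" and "g \<in> hom K A B" and "h \<in> hom K B C"
    and "\<phi> \<in> cells K f (comp1 K h g)"
    and "\<forall>D\<in>\<D>. \<forall>a\<in>hom K D A.
           left_lifting K (comp1 K f a) (comp1 K g a) h (hcomp K \<phi> (id2 K a))"
  shows "absolute_left_lifting K f g h \<phi>"
proof -
  interpret ctx K \<D> A B C f g h \<phi>
    by (unfold_locales; rule assms)
  show ?thesis by (rule absolute)
qed

end
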